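(* Let $X=(V,E,T)$ be an $(s,k,K)$-two layer system with weight function $w$. Let $A\subseteq E$ and $U\subseteq V$, and for $0\le i\le k$ let $A^i_U=\{\tau\in A:|U\cap\tau|=i\}$. Then $$\sum_{i=1}^k i\,w(A^i_U)\le\sum_{v\in U}m_v(A_v)\le (s-1)\sum_{i=1}^k i\,w(A^i_U).$$ In particular, for every $A\subseteq E$ and every $U\subseteq V$, $\sum_{v\in U}m_v(A_v)\le (s-1)k\,w(A)$.
   Context: Let $s,k,K$ be positive integers. An $(s,k,K)$-two layer system is a triple $X=(V,E,T)$ where: $V$ is a finite set; $E\subseteq 2^V$ with $|\tau|=k$ for every $\tau\in E$ and $\bigcup_{\tau\in E}\tau=V$; $T\subseteq 2^E$ with $|\sigma|=K$ for every $\sigma\in T$ and $\bigcup_{\sigma\in T}\sigma=E$. For $v\in V$, $\sigma\in T$ write $v\in\sigma$ if $v\in\tau$ for some $\tau\in\sigma$; it is required that $2\le|\{\tau\in\sigma:v\in\tau\}|\le s$ for all $\sigma\in T$, $v\in\sigma$. A positive function $w:T\to\mathbb{R}_{>0}$ is fixed and extended by $w(\tau)=\sum_{\sigma\in T,\tau\in\sigma}w(\sigma)$ ($\tau\in E$), $w(v)=\sum_{\sigma\in T,v\in\sigma}w(\sigma)$ ($v\in V$), $w(B)=\sum_{\eta\in B}w(\eta)$. For $v\in V$ let $E_v=\{\tau\in E:v\in\tau\}$. The link of $v$ is the graph with vertex set $E_v$ in which distinct $\tau_1,\tau_2\in E_v$ are adjacent iff some $\sigma\in T$ contains both, with edge weight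 $m_v(\{\tau_1,\tau_2\})=\sum_{\sigma\in T,\ \tau_1,\tau_2\in\sigma}w(\sigma)$; for $\tau\in E_v$, $m_v(\tau)$ is the sum of $m_v$ over the link edges containing $\tau$, and $m_v(B)=\sum_{\tau\in B}m_v(\tau)$ for $B\subseteq E_v$. For $A\subseteq E$, $A_v=A\cap E_v$. *)

theory Defs
  imports Complex_Main
begin

definition vin :: "'v \<Rightarrow> 'v set set \<Rightarrow> bool" where
  "vin v \<sigma> \<longleftrightarrow> (\<exists>\<tau>\<in>\<sigma>. v \<in> \<tau>)"

definition two_layer_system ::
  "nat \<Rightarrow> nat \<Rightarrow> nat \<Rightarrow> 'v set \<Rightarrow> 'v set set \<Rightarrow> 'v set set set \<Rightarrow> bool" where
  "two_layer_system s k K V E T \<longleftrightarrow>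
     0 < s \<and> 0 < k \<and> 0 < K \<and>
     finite V \<and>
     E \<subseteq> Pow V \<and> (\<forall>\<tau>\<in>E. card \<tau> = k) \<and> \<Union>E = V \<and>
     T \<subseteq> Pow E \<and> (\<forall>\<sigma>\<in>T. card \<sigma> = K) \<and> \<Union>T = E \<and>
     (\<forall>\<sigma>\<in>T. \<forall>v. vin v \<sigma> \<longrightarrow>
        2 \<le> card {\<tau>\<in>\<sigma>. v \<in> \<tau>} \<and> card {\<tau>\<in>\<sigma>. v \<in> \<tau>} \<le> s)"

definition wE :: "'v set set set \<Rightarrow> ('v set set \<Rightarrow> real) \<Rightarrow> 'v set \<Rightarrow> real" where
  "wE T w \<tau> = (\<Sum>\<sigma>\<in>{\<sigma>\<in>T. \<tau> \<in> \<sigma>}. w \<sigma>)"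

definition wEset :: "'v set set set \<Rightarrow> ('v set set \<Rightarrow> real) \<Rightarrow> 'v set set \<Rightarrow> real" where
  "wEset T w B = (\<Sum>\<tau>\<in>B. wE T w \<tau>)"

definition Ev :: "'v set set \<Rightarrow> 'v \<Rightarrow> 'v set set" where
  "Ev E v = {\<tau>\<in>E. v \<in> \<tau>}"

definition link_adj :: "'v set set \<Rightarrow> 'v set set set \<Rightarrow> 'v \<Rightarrow> 'v set \<Rightarrow> 'v set \<Rightarrow> bool" where
  "link_adj E T v \<tau>1 \<tau>2 \<longleftrightarrow> \<tau>1 \<in> Ev E v \<and> \<tau>2 \<in> Ev E v \<and> \<tau>1 \<noteq> \<tau>2 \<and>
      (\<exists>\<sigma>\<in>T. \<tau>1 \<in> \<sigma> \<and> \<tau>2 \<in> \<sigma>)"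

definition m_edge :: "'v set set set \<Rightarrow> ('v set set \<Rightarrow> real) \<Rightarrow> 'v set \<Rightarrow> 'v set \<Rightarrow> real" where
  "m_edge T w \<tau>1 \<tau>2 = (\<Sum>\<sigma>\<in>{\<sigma>\<in>T. \<tau>1 \<in> \<sigma> \<and> \<tau>2 \<in> \<sigma>}. w \<sigma>)"

definition m_vert :: "'v set set \<Rightarrow> 'v set set set \<Rightarrow> ('v set set \<Rightarrow> real) \<Rightarrow> 'v \<Rightarrow> 'v set \<Rightarrow> real" where
  "m_vert E T w v \<tau> = (\<Sum>\<tau>'\<in>{\<tau>'. link_adj E T v \<tau> \<tau>'}. m_edge T w \<tau> \<tau>')"

definition m_set :: "'v set set \<Rightarrow> 'v set set set \<Rightarrow> ('v set set \<Rightarrow> real) \<Rightarrow> 'v \<Rightarrow> 'v set set \<Rightarrow> real" where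
  "m_set E T w v B = (\<Sum>\<tau>\<in>B. m_vert E T w v \<tau>)"

definition level_set :: "'v set set \<Rightarrow> 'v set \<Rightarrow> nat \<Rightarrow> 'v set set" where
  "level_set A U i = {\<tau>\<in>A. card (U \<inter> \<tau>) = i}"

end

theory Submission
  imports Defs
begin

lemma mvert_eq:
  assumes X: "two_layer_system s k K V E T" and tE: "\<tau> \<in> E" and vt: "v \<in> \<tau>"
  shows "m_vert E T w v \<tau> = (\<Sum>\<sigma>\<in>{\<sigma>\<in>T. \<tau> \<in> \<sigma>}. w \<sigma> * (real (card {\<tau>'\<in>\<sigma>. v \<in> \<tau>'}) - 1))"
proof -
  have fV: "finite V" and EV: "E \<subseteq> Pow V" and TE: "T \<subseteq> Pow E"
    using X unfolding two_layer_system_def by auto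
  have fE: "finite E" using fV EV by (meson finite_Pow_iff finite_subset)
  have fT: "finite T" using fE TE by (meson finite_Pow_iff finite_subset)
  define N where "N = {\<tau>'. link_adj E T v \<tau> \<tau>'}"
  have fN: "finite N" unfolding N_def link_adj_def Ev_def
    by (rule finite_subset[OF _ fE]) auto
  have "m_vert E T w v \<tau> = (\<Sum>\<tau>'\<in>N. \<Sum>\<sigma>\<in>{\<sigma>\<in>{\<sigma>\<in>T. \<tau> \<in> \<sigma>}. \<tau>' \<in> \<sigma>}. w \<sigma>)"
    unfolding m_vert_def m_edge_def N_def
    by (intro sum.cong refl arg_cong[where f="sum w"]) auto
  also have "\<dots> = (\<Sum>\<sigma>\<in>{\<sigma>\<in>T. \<tau> \<in> \<sigma>}. \<Sum>\<tau>'\<in>{\<tau>'\<in>N. \<tau>' \<in> \<sigma>}. w \<sigma>)"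
    by (rule sum.swap_restrict) (use fN fT in auto)
  also have "\<dots> = (\<Sum>\<sigma>\<in>{\<sigma>\<in>T. \<tau> \<in> \<sigma>}. w \<sigma> * (real (card {\<tau>'\<in>\<sigma>. v \<in> \<tau>'}) - 1))"
  proof (rule sum.cong[OF refl])
    fix \<sigma> assume s: "\<sigma> \<in> {\<sigma>\<in>T. \<tau> \<in> \<sigma>}"
    have sE: "\<sigma> \<subseteq> E" using s TE by auto
    have fs: "finite \<sigma>" using sE fE finite_subset by blast
    have eq: "{\<tau>'\<in>N. \<tau>' \<in> \<sigma>} = {\<tau>'\<in>\<sigma>. v \<in> \<tau>'} - {\<tau>}"
      using s sE tE vt unfolding N_def link_adj_def Ev_def by auto
    have c: "card ({\<tau>'\<in>\<sigma>. v \<in> \<tau>'} - {\<tau>}) = card {\<tau>'\<in>\<sigma>. v \<in> \<tau>'} - 1"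
      using s vt by (simp add: card_Diff_singleton)
    have c1: "card {\<tau>'\<in>\<sigma>. v \<in> \<tau>'} \<ge> 1"
      using s vt fs by (metis (mono_tags, lifting) One_nat_def Suc_leI card_gt_0_iff empty_iff finite_subset mem_Collect_eq subsetI)
    show "(\<Sum>\<tau>'\<in>{\<tau>'\<in>N. \<tau>' \<in> \<sigma>}. w \<sigma>) = w \<sigma> * (real (card {\<tau>'\<in>\<sigma>. v \<in> \<tau>'}) - 1)"
      using c c1 by (simp add: eq of_nat_diff)
  qed
  finally show ?thesis .
qed

lemma mvert_bounds:
  assumes X: "two_layer_system s k K V E T" and wpos: "\<forall>\<sigma>\<in>T. w \<sigma> > 0"
    and tE: "\<tau> \<in> E" and vt: "v \<in> \<tau>"
  shows "wE T w \<tau> \<le> m_vert E T w v \<tau> \<and> m_vert E T w v \<tau> \<le> (real s - 1) * wE T w \<tau>"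
proof -
  have cb: "2 \<le> card {\<tau>'\<in>\<sigma>. v \<in> \<tau>'} \<and> card {\<tau>'\<in>\<sigma>. v \<in> \<tau>'} \<le> s" if "\<sigma> \<in> T" "\<tau> \<in> \<sigma>" for \<sigma>
  proof -
    have "vin v \<sigma>" using that vt unfolding vin_def by auto
    thus ?thesis using X that unfolding two_layer_system_def by blast
  qed
  have "wE T w \<tau> \<le> m_vert E T w v \<tau>"
    unfolding mvert_eq[OF X tE vt] wE_def
  proof (rule sum_mono)
    fix \<sigma> assume "\<sigma> \<in> {\<sigma>\<in>T. \<tau> \<in> \<sigma>}"
    hence "w \<sigma> > 0" "real (card {\<tau>'\<in>\<sigma>. v \<in> \<tau>'}) \<ge> 2" using wpos cb by auto
    thus "w \<sigma> \<le> w \<sigma> * (real (card {\<tau>'\<in>\<sigma>. v \<in> \<tau>'}) - 1)" by (simp add: mult_le_cancel_left1)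
  qed
  moreover have "m_vert E T w v \<tau> \<le> (real s - 1) * wE T w \<tau>"
    unfolding mvert_eq[OF X tE vt] wE_def sum_distrib_left
  proof (rule sum_mono)
    fix \<sigma> assume "\<sigma> \<in> {\<sigma>\<in>T. \<tau> \<in> \<sigma>}"
    hence "w \<sigma> > 0" "real (card {\<tau>'\<in>\<sigma>. v \<in> \<tau>'}) \<le> real s" using wpos cb by auto
    thus "w \<sigma> * (real (card {\<tau>'\<in>\<sigma>. v \<in> \<tau>'}) - 1) \<le> (real s - 1) * w \<sigma>"
      by (simp add: mult.commute)
  qed
  ultimately show ?thesis by blast
qed

theorem proposition2p9:
  fixes s k K :: nat and V :: "'v set" and E :: "'v set set" and T :: "'v set set set"
    and w :: "'v set set \<Rightarrow> real" and A :: "'v set set" and U :: "'v set"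
  assumes X: "two_layer_system s k K V E T"
    and wpos: "\<forall>\<sigma>\<in>T. w \<sigma> > 0"
    and A: "A \<subseteq> E" and U: "U \<subseteq> V"
  shows "(\<Sum>i=1..k. real i * wEset T w (level_set A U i))
           \<le> (\<Sum>v\<in>U. m_set E T w v (A \<inter> Ev E v))
       \<and> (\<Sum>v\<in>U. m_set E T w v (A \<inter> Ev E v))
           \<le> (real s - 1) * (\<Sum>i=1..k. real i * wEset T w (level_set A U i))
       \<and> (\<Sum>v\<in>U. m_set E T w v (A \<inter> Ev E v)) \<le> (real s - 1) * real k * wEset T w A"
proof -
  have fV: "finite V" and EV: "E \<subseteq> Pow V" and TE: "T \<subseteq> Pow E"
    and ck: "\<forall>\<tau>\<in>E. card \<tau> = k" and s0: "0 < s"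
    using X unfolding two_layer_system_def by auto
  have fE: "finite E" using fV EV by (meson finite_Pow_iff finite_subset)
  have fA: "finite A" using fE A finite_subset by blast
  have fU: "finite U" using fV U finite_subset by blast
  have wE0: "wE T w \<tau> \<ge> 0" for \<tau>
    unfolding wE_def using wpos by (intro sum_nonneg) (auto intro: less_imp_le)
  define c where "c \<tau> = card (U \<inter> \<tau>)" for \<tau>
  have ckk: "c \<tau> \<le> k" if "\<tau> \<in> A" for \<tau>
  proof -
    have "finite \<tau>" using that A EV fV finite_subset by blast
    hence "card (U \<inter> \<tau>) \<le> card \<tau>" by (simp add: card_mono)
    thus ?thesis using ck that A c_def by auto
  qed
  define S where "S = (\<Sum>\<tau>\<in>A. real (c \<tau>) * wE T w \<tau>)"
  have L: "(\<Sum>i=1..k. real i * wEset T w (level_set A U i)) = S"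
  proof -
    have "(\<Sum>i=1..k. real i * wEset T w (level_set A U i))
        = (\<Sum>i\<in>{1..k}. \<Sum>\<tau>\<in>{\<tau>\<in>A. c \<tau> = i}. real (c \<tau>) * wE T w \<tau>)"
      unfolding wEset_def level_set_def sum_distrib_left c_def
      by (intro sum.cong refl) auto
    also have "\<dots> = (\<Sum>\<tau>\<in>A. \<Sum>i\<in>{i\<in>{1..k}. c \<tau> = i}. real (c \<tau>) * wE T w \<tau>)"
      by (rule sum.swap_restrict) (use fA in auto)
    also have "\<dots> = S" unfolding S_def
    proof (rule sum.cong[OF refl])
      fix \<tau> assume t: "\<tau> \<in> A"
      show "(\<Sum>i\<in>{i\<in>{1..k}. c \<tau> = i}. real (c \<tau>) * wE T w \<tau>) = real (c \<tau>) * wE T w \<tau>"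
      proof (cases "c \<tau> = 0")
        case True thus ?thesis by simp
      next
        case False
        hence "{i\<in>{1..k}. c \<tau> = i} = {c \<tau>}" using ckk[OF t] by auto
        thus ?thesis by simp
      qed
    qed
    finally show ?thesis .
  qed
  define M where "M = (\<Sum>v\<in>U. m_set E T w v (A \<inter> Ev E v))"
  have M: "M = (\<Sum>\<tau>\<in>A. \<Sum>v\<in>{v\<in>U. v \<in> \<tau>}. m_vert E T w v \<tau>)"
  proof -
    have "M = (\<Sum>v\<in>U. \<Sum>\<tau>\<in>{\<tau>\<in>A. v \<in> \<tau>}. m_vert E T w v \<tau>)"
      unfolding M_def m_set_def Ev_def
      by (intro sum.cong refl arg_cong[where f="sum _"]) (use A in auto)
    also have "\<dots> = (\<Sum>\<tau>\<in>A. \<Sum>v\<in>{v\<in>U. v \<in> \<tau>}. m_vert E T w v \<tau>)"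
      by (rule sum.swap_restrict) (use fA fU in auto)
    finally show ?thesis .
  qed
  have cc: "card {v\<in>U. v \<in> \<tau>} = c \<tau>" for \<tau>
    unfolding c_def by (metis Collect_conj_eq Collect_mem_eq)
  have low: "S \<le> M" unfolding M S_def
  proof (rule sum_mono)
    fix \<tau> assume t: "\<tau> \<in> A"
    have "real (c \<tau>) * wE T w \<tau> = (\<Sum>v\<in>{v\<in>U. v \<in> \<tau>}. wE T w \<tau>)" using cc by simp
    also have "\<dots> \<le> (\<Sum>v\<in>{v\<in>U. v \<in> \<tau>}. m_vert E T w v \<tau>)"
      using mvert_bounds[OF X wpos] t A by (intro sum_mono) auto
    finally show "real (c \<tau>) * wE T w \<tau> \<le> (\<Sum>v\<in>{v\<in>U. v \<in> \<tau>}. m_vert E T w v \<tau>)" .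
  qed
  have up: "M \<le> (real s - 1) * S" unfolding M S_def sum_distrib_left
  proof (rule sum_mono)
    fix \<tau> assume t: "\<tau> \<in> A"
    have "(\<Sum>v\<in>{v\<in>U. v \<in> \<tau>}. m_vert E T w v \<tau>) \<le> (\<Sum>v\<in>{v\<in>U. v \<in> \<tau>}. (real s - 1) * wE T w \<tau>)"
      using mvert_bounds[OF X wpos] t A by (intro sum_mono) auto
    also have "\<dots> = (real s - 1) * (real (c \<tau>) * wE T w \<tau>)" using cc by simp
    finally show "(\<Sum>v\<in>{v\<in>U. v \<in> \<tau>}. m_vert E T w v \<tau>) \<le> (real s - 1) * (real (c \<tau>) * wE T w \<tau>)" .
  qed
  have Sk: "S \<le> real k * wEset T w A" unfolding S_def wEset_def sum_distrib_left
    using ckk wE0 by (intro sum_mono mult_right_mono) auto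
  have s1: "real s - 1 \<ge> 0" using s0 by simp
  have "M \<le> (real s - 1) * real k * wEset T w A"
    using up mult_left_mono[OF Sk s1] by (simp add: mult.assoc)
  thus ?thesis using L low up M_def by simp
qed

end
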